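(* Let $u$ be a vertex of $K$ and $n\in\mathbb N$. The edge-path distance from any boundary vertex of the ball $B(u,n,K)$ to $u$ is either $n$ or $n-1$.
   Context: $K$ is the pentagonal combinatorial tiling: a 2-dimensional CW-complex homeomorphic to the open disk, obtained as follows. The subdivision rule $\omega$ acts on a pentagon with boundary vertices $v_1,\dots,v_5$ in cyclic order (indices mod 5): add a vertex $m_i$ inside each edge $v_iv_{i+1}$, interior vertices $c_1,\dots,c_5$, edges $c_ic_{i+1}$ and $c_im_i$, and replace the face by the central pentagon $c_1\cdots c_5$ and petals $v_i\,m_i\,c_i\,c_{i-1}\,m_{i-1}$. $K_0$ is one pentagon, $K_n=\omega^n(K_0)$, $K_n$ embeds onto the central superpentagon $\omega^n(\text{central face of }\omega(K_0))$ of $K_{n+1}$, and $K$ is the direct limit. Distance between vertices is the length of a shortest edge path. $B(u,n,K)$ is the subcomplex of $K$ consisting of the faces all of whose vertices are at distance at most $n$ from $u$, with their edges and vertices. Its boundary consists of the edges $e$ that lie in a face in the ball and in a face not in the ball, together with their vertices. *)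

theory Defs
  imports Main "HOL-Library.FSet"
begin

text \<open>Cor n i is the i-th corner (i < 5) of the n-th superpentagon P_n;
  M {a,b} is the vertex added inside the edge ab; C F i is the interior vertex c_i
  added inside the face F (a face is the cyclic list of its 5 boundary vertices).\<close>
datatype vtx = Cor nat nat | M "vtx fset" | C "vtx list" nat

definition corner_face :: "nat \<Rightarrow> vtx list" where
  "corner_face n = map (Cor n) [0..<5]"

text \<open>Name of the interior vertex c_i of face F.  The only exception is the
  superpentagon P_(n+1), whose central pentagon is named as P_n; this makes the
  embedding of K_n onto the central superpentagon of K_(n+1) a literal inclusion.\<close>
definition cen :: "vtx list \<Rightarrow> nat \<Rightarrow> vtx" where
  "cen F i = (if (\<exists>n. F = corner_face (Suc n))
              then Cor (THE n. F = corner_face (Suc n)) i else C F i)"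

definition mid :: "vtx \<Rightarrow> vtx \<Rightarrow> vtx" where
  "mid a b = M {|a, b|}"

text \<open>The subdivision rule omega on one pentagon v_0 ... v_4 (indices mod 5):
  central pentagon c_0 ... c_4 and petals v_i m_i c_i c_(i-1) m_(i-1).\<close>
definition omega_face :: "vtx list \<Rightarrow> vtx list set" where
  "omega_face F =
     {map (cen F) [0..<5]} \<union>
     (\<lambda>i. [F ! i, mid (F ! i) (F ! ((i + 1) mod 5)), cen F i, cen F ((i + 4) mod 5),
           mid (F ! ((i + 4) mod 5)) (F ! i)]) ` {0..<5}"

definition omega :: "vtx list set \<Rightarrow> vtx list set" where
  "omega X = \<Union> (omega_face ` X)"

text \<open>K_n = omega^n (K_0), with K_0 realised as the pentagon P_n.\<close>
definition Kn :: "nat \<Rightarrow> vtx list set" where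
  "Kn n = (omega ^^ n) {corner_face n}"

definition Kfaces :: "vtx list set" where
  "Kfaces = (\<Union>n. Kn n)"

definition Kverts :: "vtx set" where
  "Kverts = (\<Union>F\<in>Kfaces. set F)"

definition face_edges :: "vtx list \<Rightarrow> vtx set set" where
  "face_edges F = (\<lambda>i. {F ! i, F ! ((i + 1) mod 5)}) ` {0..<5}"

definition Kedges :: "vtx set set" where
  "Kedges = (\<Union>F\<in>Kfaces. face_edges F)"

definition Kadj :: "vtx \<Rightarrow> vtx \<Rightarrow> bool" where
  "Kadj a b \<longleftrightarrow> a \<noteq> b \<and> {a, b} \<in> Kedges"

definition Kdist :: "vtx \<Rightarrow> vtx \<Rightarrow> nat" where
  "Kdist u v = (LEAST k. (Kadj ^^ k) u v)"

definition ball_faces :: "vtx \<Rightarrow> nat \<Rightarrow> vtx list set" where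
  "ball_faces u n = {F \<in> Kfaces. \<forall>v \<in> set F. Kdist u v \<le> n}"

definition ball_boundary_edges :: "vtx \<Rightarrow> nat \<Rightarrow> vtx set set" where
  "ball_boundary_edges u n =
     {e. (\<exists>F \<in> ball_faces u n. e \<in> face_edges F) \<and>
         (\<exists>G \<in> Kfaces - ball_faces u n. e \<in> face_edges G)}"

definition ball_boundary_verts :: "vtx \<Rightarrow> nat \<Rightarrow> vtx set" where
  "ball_boundary_verts u n = \<Union> (ball_boundary_edges u n)"

end

theory Submission
  imports Defs
begin

lemma len_face: "G \<in> Kfaces \<Longrightarrow> length G = 5"
proof -
  assume "G \<in> Kfaces"
  then obtain n where G: "G \<in> (omega ^^ n) {corner_face n}" by (auto simp: Kfaces_def Kn_def)
  show ?thesis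
  proof (cases n)
    case 0 then show ?thesis using G by (simp add: corner_face_def)
  next
    case (Suc k)
    then show ?thesis using G by (auto simp: omega_def omega_face_def)
  qed
qed

lemma edge_in_set: "F \<in> Kfaces \<Longrightarrow> e \<in> face_edges F \<Longrightarrow> v \<in> e \<Longrightarrow> v \<in> set F"
  using len_face[of F] by (auto simp: face_edges_def)

definition stp :: "vtx \<Rightarrow> vtx \<Rightarrow> bool" where
  "stp a b \<longleftrightarrow> Kadj a b \<or> a = b"

lemma stp_face: assumes "G \<in> Kfaces" "i < 5"
  shows "stp (G ! i) (G ! ((i+1) mod 5))" "stp (G ! ((i+1) mod 5)) (G ! i)"
proof -
  have "{G ! i, G ! ((i+1) mod 5)} \<in> Kedges"
  proof -
    have "{G ! i, G ! ((i+1) mod 5)} \<in> face_edges G"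
      unfolding face_edges_def by (rule image_eqI[where x=i]) (use assms(2) in simp_all)
    then show ?thesis unfolding Kedges_def using assms(1) by (rule UN_I[rotated])
  qed
  moreover have "{G ! ((i+1) mod 5), G ! i} = {G ! i, G ! ((i+1) mod 5)}" by auto
  ultimately show "stp (G ! i) (G ! ((i+1) mod 5))" "stp (G ! ((i+1) mod 5)) (G ! i)"
    by (auto simp: stp_def Kadj_def)
qed

lemma stp_face': assumes "G \<in> Kfaces" "i < 5" "j = (i+1) mod 5"
  shows "stp (G ! i) (G ! j) \<and> stp (G ! j) (G ! i)"
  using stp_face[OF assms(1,2)] assms(3) by simp

lemma stp_refl: "stp a a" by (simp add: stp_def)

lemma pent: assumes "G \<in> Kfaces" "a \<in> set G" "b \<in> set G"
  shows "\<exists>c. stp a c \<and> stp c b"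
proof -
  have L: "length G = 5" using len_face assms(1) by auto
  obtain i where i: "i < 5" "a = G ! i" using assms(2) L by (metis in_set_conv_nth)
  obtain j where j: "j < 5" "b = G ! j" using assms(3) L by (metis in_set_conv_nth)
  have s0: "stp (G!0) (G!1)" "stp (G!1) (G!0)" using stp_face'[OF assms(1), of 0 1] by simp_all
  have s1: "stp (G!1) (G!2)" "stp (G!2) (G!1)" using stp_face'[OF assms(1), of 1 2] by simp_all
  have s2: "stp (G!2) (G!3)" "stp (G!3) (G!2)" using stp_face'[OF assms(1), of 2 3] by simp_all
  have s3: "stp (G!3) (G!4)" "stp (G!4) (G!3)" using stp_face'[OF assms(1), of 3 4] by simp_all
  have s4: "stp (G!4) (G!0)" "stp (G!0) (G!4)" using stp_face'[OF assms(1), of 4 0] by simp_all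
  have "i = 0 \<or> i = 1 \<or> i = 2 \<or> i = 3 \<or> i = 4" using i by auto
  moreover have "j = 0 \<or> j = 1 \<or> j = 2 \<or> j = 3 \<or> j = 4" using j by auto
  ultimately have "\<exists>c. stp (G ! i) c \<and> stp c (G ! j)"
    apply (elim disjE)
    apply (simp_all only:)
    using s0 s1 s2 s3 s4 stp_refl by blast+
  then show ?thesis using i j by simp
qed

definition reach :: "nat \<Rightarrow> vtx \<Rightarrow> vtx \<Rightarrow> bool" where
  "reach k a b \<longleftrightarrow> (\<exists>j\<le>k. (Kadj ^^ j) a b)"

lemma reach_stp: "reach k a b \<Longrightarrow> stp b c \<Longrightarrow> reach (Suc k) a c"
  unfolding reach_def stp_def
  by (metis Suc_le_mono le_Suc_eq relpowp_Suc_I)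

lemma Kdist_le: "(Kadj ^^ j) u v \<Longrightarrow> Kdist u v \<le> j"
  unfolding Kdist_def by (rule Least_le)

lemma Kdist_path: "(Kadj ^^ j) u v \<Longrightarrow> (Kadj ^^ Kdist u v) u v"
  unfolding Kdist_def by (rule LeastI)

lemma reach_Kdist: "reach k u v \<Longrightarrow> Kdist u v \<le> k"
  unfolding reach_def using Kdist_le by force

lemma two_steps:
  assumes "(Kadj ^^ j) u v" "stp v c" "stp c w"
  shows "Kdist u w \<le> j + 2"
proof -
  have "reach j u v" using assms(1) by (auto simp: reach_def)
  then have "reach (Suc (Suc j)) u w" using reach_stp assms by blast
  then show ?thesis using reach_Kdist by force
qed

theorem mainTheorem17:
  fixes u v :: vtx and n :: nat
  assumes "u \<in> Kverts"
    and "v \<in> ball_boundary_verts u n"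
  shows "Kdist u v = n \<or> Kdist u v + 1 = n"
proof -
  obtain e F G where e: "v \<in> e" and F: "F \<in> ball_faces u n" "e \<in> face_edges F"
    and G: "G \<in> Kfaces" "G \<notin> ball_faces u n" "e \<in> face_edges G"
    using assms(2) by (auto simp: ball_boundary_verts_def ball_boundary_edges_def)
  have FK: "F \<in> Kfaces" using F by (simp add: ball_faces_def)
  have vF: "v \<in> set F" using edge_in_set[OF FK F(2) e] .
  have vle: "Kdist u v \<le> n" using F(1) vF by (auto simp: ball_faces_def)
  have vG: "v \<in> set G" using edge_in_set[OF G(1) G(3) e] .
  obtain w where w: "w \<in> set G" "n < Kdist u w"
    using G(1,2) by (auto simp: ball_faces_def not_le)
  obtain c where c: "stp v c" "stp c w" using pent[OF G(1) vG w(1)] by blast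
  show ?thesis
  proof (cases "\<exists>k. (Kadj ^^ k) u v")
    case True
    then obtain k where "(Kadj ^^ k) u v" by blast
    then have "(Kadj ^^ Kdist u v) u v" by (rule Kdist_path)
    then have "Kdist u w \<le> Kdist u v + 2" using two_steps c by blast
    then show ?thesis using vle w(2) by linarith
  next
    case False
    have nw: "\<not> (Kadj ^^ k) u w" for k
    proof
      assume p: "(Kadj ^^ k) u w"
      obtain d where d: "stp w d" "stp d v" using pent[OF G(1) w(1) vG] by blast
      have "reach k u w" using p by (auto simp: reach_def)
      then have "reach (Suc (Suc k)) u v" using reach_stp d by blast
      then show False using False by (auto simp: reach_def)
    qed
    have "(\<lambda>k. (Kadj ^^ k) u v) = (\<lambda>k. (Kadj ^^ k) u w)" using False nw by auto
    then have "Kdist u v = Kdist u w" by (simp add: Kdist_def)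
    then show ?thesis using vle w(2) by linarith
  qed
qed

end
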